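(* A functor $f\colon A\to B$ between small categories is injective on objects if and only if it is isomorphic, in the arrow category $\mathbf{Cat}^{\mathbf{2}}$, to $\Pi(g)$ for some monomorphism $g$ of simplicial sets.
   Context: $\Pi\colon\mathbf{SSet}\to\mathbf{Cat}$ denotes the left adjoint of the nerve functor $N\colon\mathbf{Cat}\to\mathbf{SSet}$ (sending a simplicial set to its fundamental/classifying category). $\mathbf{Cat}^{\mathbf{2}}$ is the category whose objects are functors and whose morphisms are commutative squares. *)

theory Defs
  imports Main
begin

record ('o, 'm) cat =
  cObj  :: "'o set"
  cArr  :: "'m set"
  cDom  :: "'m \<Rightarrow> 'o"
  cCod  :: "'m \<Rightarrow> 'o"
  cId   :: "'o \<Rightarrow> 'm"
  cComp :: "'m \<Rightarrow> 'm \<Rightarrow> 'm"   (* cComp g f = g o f *)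

definition is_category :: "('o, 'm) cat \<Rightarrow> bool" where
  "is_category C \<longleftrightarrow>
     (\<forall>f\<in>cArr C. cDom C f \<in> cObj C \<and> cCod C f \<in> cObj C) \<and>
     (\<forall>x\<in>cObj C. cId C x \<in> cArr C \<and> cDom C (cId C x) = x \<and> cCod C (cId C x) = x) \<and>
     (\<forall>f\<in>cArr C. \<forall>g\<in>cArr C. cDom C g = cCod C f \<longrightarrow>
        cComp C g f \<in> cArr C \<and> cDom C (cComp C g f) = cDom C f \<and> cCod C (cComp C g f) = cCod C g) \<and>
     (\<forall>f\<in>cArr C. cComp C (cId C (cCod C f)) f = f \<and> cComp C f (cId C (cDom C f)) = f) \<and>
     (\<forall>f\<in>cArr C. \<forall>g\<in>cArr C. \<forall>h\<in>cArr C. cDom C g = cCod C f \<and> cDom C h = cCod C g \<longrightarrow>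
        cComp C h (cComp C g f) = cComp C (cComp C h g) f)"

definition is_functor ::
  "('o, 'm) cat \<Rightarrow> ('p, 'n) cat \<Rightarrow> ('o \<Rightarrow> 'p) \<Rightarrow> ('m \<Rightarrow> 'n) \<Rightarrow> bool" where
  "is_functor C D Fo Fm \<longleftrightarrow>
     (\<forall>x\<in>cObj C. Fo x \<in> cObj D) \<and>
     (\<forall>f\<in>cArr C. Fm f \<in> cArr D \<and> cDom D (Fm f) = Fo (cDom C f) \<and> cCod D (Fm f) = Fo (cCod C f)) \<and>
     (\<forall>x\<in>cObj C. Fm (cId C x) = cId D (Fo x)) \<and>
     (\<forall>f\<in>cArr C. \<forall>g\<in>cArr C. cDom C g = cCod C f \<longrightarrow> Fm (cComp C g f) = cComp D (Fm g) (Fm f))"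

definition iso_functor ::
  "('o, 'm) cat \<Rightarrow> ('p, 'n) cat \<Rightarrow> ('o \<Rightarrow> 'p) \<Rightarrow> ('m \<Rightarrow> 'n) \<Rightarrow> bool" where
  "iso_functor C D Fo Fm \<longleftrightarrow> is_functor C D Fo Fm \<and>
     (\<exists>Go Gm. is_functor D C Go Gm \<and>
        (\<forall>x\<in>cObj C. Go (Fo x) = x) \<and> (\<forall>y\<in>cObj D. Fo (Go y) = y) \<and>
        (\<forall>f\<in>cArr C. Gm (Fm f) = f) \<and> (\<forall>g\<in>cArr D. Fm (Gm g) = g))"

definition arrow_iso ::
  "('o1, 'm1) cat \<Rightarrow> ('o2, 'm2) cat \<Rightarrow> ('o1 \<Rightarrow> 'o2) \<Rightarrow> ('m1 \<Rightarrow> 'm2) \<Rightarrow>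
   ('o3, 'm3) cat \<Rightarrow> ('o4, 'm4) cat \<Rightarrow> ('o3 \<Rightarrow> 'o4) \<Rightarrow> ('m3 \<Rightarrow> 'm4) \<Rightarrow> bool" where
  "arrow_iso C D Fo Fm C' D' Go Gm \<longleftrightarrow>
     (\<exists>ao am bo bm. iso_functor C C' ao am \<and> iso_functor D D' bo bm \<and>
        (\<forall>x\<in>cObj C. Go (ao x) = bo (Fo x)) \<and>
        (\<forall>f\<in>cArr C. Gm (am f) = bm (Fm f)))"

text \<open>A morphism [m] -> [n] of the simplex category: a monotone map
  {0..m} -> {0..n} (values outside {0..m} are irrelevant).\<close>
definition dmap :: "nat \<Rightarrow> nat \<Rightarrow> (nat \<Rightarrow> nat) \<Rightarrow> bool" where
  "dmap m n \<theta> \<longleftrightarrow> (\<forall>i\<le>m. \<theta> i \<le> n) \<and> (\<forall>i j. i \<le> j \<and> j \<le> m \<longrightarrow> \<theta> i \<le> \<theta> j)"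

text \<open>A simplicial set: sets of n-simplices, and for every theta : [m] -> [n]
  a map sact m n theta : X_n -> X_m, contravariantly functorial.\<close>
record 'a sset =
  Simp :: "nat \<Rightarrow> 'a set"
  sact :: "nat \<Rightarrow> nat \<Rightarrow> (nat \<Rightarrow> nat) \<Rightarrow> 'a \<Rightarrow> 'a"

definition is_sset :: "'a sset \<Rightarrow> bool" where
  "is_sset X \<longleftrightarrow>
     (\<forall>m n \<theta>. dmap m n \<theta> \<longrightarrow> (\<forall>x\<in>Simp X n. sact X m n \<theta> x \<in> Simp X m)) \<and>
     (\<forall>n. \<forall>x\<in>Simp X n. sact X n n id x = x) \<and>
     (\<forall>k m n \<phi> \<theta>. dmap k m \<phi> \<and> dmap m n \<theta> \<longrightarrow>
        (\<forall>x\<in>Simp X n. sact X k m \<phi> (sact X m n \<theta> x) = sact X k n (\<theta> \<circ> \<phi>) x)) \<and>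
     (\<forall>m n \<theta> \<theta>'. dmap m n \<theta> \<and> dmap m n \<theta>' \<and> (\<forall>i\<le>m. \<theta> i = \<theta>' i) \<longrightarrow>
        (\<forall>x\<in>Simp X n. sact X m n \<theta> x = sact X m n \<theta>' x))"

definition is_smap :: "'a sset \<Rightarrow> 'b sset \<Rightarrow> (nat \<Rightarrow> 'a \<Rightarrow> 'b) \<Rightarrow> bool" where
  "is_smap X Y g \<longleftrightarrow>
     (\<forall>n. \<forall>x\<in>Simp X n. g n x \<in> Simp Y n) \<and>
     (\<forall>m n \<theta>. dmap m n \<theta> \<longrightarrow>
        (\<forall>x\<in>Simp X n. g m (sact X m n \<theta> x) = sact Y m n \<theta> (g n x)))"

definition is_smono :: "'a sset \<Rightarrow> 'b sset \<Rightarrow> (nat \<Rightarrow> 'a \<Rightarrow> 'b) \<Rightarrow> bool" where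
  "is_smono X Y g \<longleftrightarrow> is_smap X Y g \<and> (\<forall>n. inj_on (g n) (Simp X n))"

definition ssrc :: "'a sset \<Rightarrow> 'a \<Rightarrow> 'a" where
  "ssrc X e = sact X 0 1 (\<lambda>_. 0) e"
definition stgt :: "'a sset \<Rightarrow> 'a \<Rightarrow> 'a" where
  "stgt X e = sact X 0 1 (\<lambda>_. 1) e"
definition sdegen0 :: "'a sset \<Rightarrow> 'a \<Rightarrow> 'a" where
  "sdegen0 X x = sact X 1 0 (\<lambda>_. 0) x"
text \<open>Faces of a 2-simplex: d0 (edge 1->2), d1 (edge 0->2), d2 (edge 0->1).\<close>
definition sface0 :: "'a sset \<Rightarrow> 'a \<Rightarrow> 'a" where
  "sface0 X s = sact X 1 2 (\<lambda>j. j + 1) s"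
definition sface1 :: "'a sset \<Rightarrow> 'a \<Rightarrow> 'a" where
  "sface1 X s = sact X 1 2 (\<lambda>j. 2 * j) s"
definition sface2 :: "'a sset \<Rightarrow> 'a \<Rightarrow> 'a" where
  "sface2 X s = sact X 1 2 (\<lambda>j. j) s"

fun schain :: "'a sset \<Rightarrow> 'a \<Rightarrow> 'a list \<Rightarrow> bool" where
  "schain X a [] = True"
| "schain X a (e # es) = (ssrc X e = a \<and> schain X (stgt X e) es)"

fun spath_end :: "'a sset \<Rightarrow> 'a \<Rightarrow> 'a list \<Rightarrow> 'a" where
  "spath_end X a [] = a"
| "spath_end X a (e # es) = spath_end X (stgt X e) es"

definition valid_path :: "'a sset \<Rightarrow> 'a \<times> 'a list \<Rightarrow> bool" where
  "valid_path X p \<longleftrightarrow> fst p \<in> Simp X 0 \<and> set (snd p) \<subseteq> Simp X 1 \<and> schain X (fst p) (snd p)"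

text \<open>The congruence on paths generated by s0 x = id_x and d1 s = d0 s o d2 s.\<close>
inductive pirel :: "'a sset \<Rightarrow> 'a \<times> 'a list \<Rightarrow> 'a \<times> 'a list \<Rightarrow> bool" for X where
  prefl: "valid_path X p \<Longrightarrow> pirel X p p"
| psym: "pirel X p q \<Longrightarrow> pirel X q p"
| ptrans: "pirel X p q \<Longrightarrow> pirel X q r \<Longrightarrow> pirel X p r"
| pid: "x \<in> Simp X 0 \<Longrightarrow> valid_path X (a, us @ [sdegen0 X x] @ vs) \<Longrightarrow>
          pirel X (a, us @ [sdegen0 X x] @ vs) (a, us @ vs)"
| pcomp: "s \<in> Simp X 2 \<Longrightarrow> valid_path X (a, us @ [sface2 X s, sface0 X s] @ vs) \<Longrightarrow>
          pirel X (a, us @ [sface2 X s, sface0 X s] @ vs) (a, us @ [sface1 X s] @ vs)"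

definition pi_class :: "'a sset \<Rightarrow> 'a \<times> 'a list \<Rightarrow> ('a \<times> 'a list) set" where
  "pi_class X p = {q. pirel X p q}"

definition Pi_cat :: "'a sset \<Rightarrow> ('a, ('a \<times> 'a list) set) cat" where
  "Pi_cat X =
     \<lparr> cObj = Simp X 0,
       cArr = {pi_class X p | p. valid_path X p},
       cDom = (\<lambda>c. fst (SOME p. p \<in> c)),
       cCod = (\<lambda>c. let p = (SOME p. p \<in> c) in spath_end X (fst p) (snd p)),
       cId = (\<lambda>x. pi_class X (x, [])),
       cComp = (\<lambda>c d. let p = (SOME p. p \<in> d); q = (SOME q. q \<in> c)
                      in pi_class X (fst p, snd p @ snd q)) \<rparr>"

definition Pi_obj :: "(nat \<Rightarrow> 'a \<Rightarrow> 'b) \<Rightarrow> 'a \<Rightarrow> 'b" where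
  "Pi_obj g = g 0"

definition Pi_arr :: "'b sset \<Rightarrow> (nat \<Rightarrow> 'a \<Rightarrow> 'b) \<Rightarrow> ('a \<times> 'a list) set \<Rightarrow> ('b \<times> 'b list) set" where
  "Pi_arr Y g c = (let p = (SOME p. p \<in> c) in pi_class Y (g 0 (fst p), map (g 1) (snd p)))"

type_synonym ('ao, 'bo, 'am, 'bm) wit = "('ao + 'bo + 'am + 'bm + nat) list"

end

theory Submission
  imports Defs
begin


definition pairs :: "nat \<Rightarrow> (nat \<times> nat) list" where
  "pairs n = concat (map (\<lambda>i. map (\<lambda>j. (i,j)) [i..<Suc n]) [0..<Suc n])"

lemma set_pairs: "set (pairs n) = {(i,j). i \<le> j \<and> j \<le> n}"
proof -
  have "(i,j) \<in> set (pairs n) \<longleftrightarrow> i \<le> j \<and> j \<le> n" for i j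
    unfolding pairs_def set_concat set_map by (force simp del: upt_Suc simp: less_Suc_eq_le)
  thus ?thesis by auto
qed

definition enc :: "nat \<Rightarrow> (nat \<Rightarrow> nat \<Rightarrow> 'e) \<Rightarrow> 'e list" where
  "enc n M = map (\<lambda>(i,j). M i j) (pairs n)"

lemma enc_eq: "enc n M = enc n M' \<longleftrightarrow> (\<forall>i j. i \<le> j \<and> j \<le> n \<longrightarrow> M i j = M' i j)"
  unfolding enc_def map_eq_conv set_pairs by auto

lemma enc0: "enc 0 M = [M 0 0]" by (simp add: enc_def pairs_def)
lemma enc1': "enc (Suc 0) M = [M 0 0, M 0 1, M 1 1]" by (simp add: enc_def pairs_def)
lemma enc1: "enc 1 M = [M 0 0, M 0 1, M 1 1]" by (simp add: enc_def pairs_def)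
lemma enc2: "enc 2 M = [M 0 0, M 0 1, M 0 2, M 1 1, M 1 2, M 2 2]"
  by (simp add: enc_def pairs_def numeral_2_eq_2)

lemma set_enc: "set (enc n M) = {M i j | i j. i \<le> j \<and> j \<le> n}"
  unfolding enc_def set_map set_pairs by auto

definition mvalid :: "('o,'m) cat \<Rightarrow> 'e set \<Rightarrow> ('e \<Rightarrow> 'm) \<Rightarrow> ('o \<Rightarrow> 'e) \<Rightarrow> nat \<Rightarrow> (nat \<Rightarrow> nat \<Rightarrow> 'e) \<Rightarrow> bool" where
  "mvalid D E p ie n M \<longleftrightarrow>
     (\<forall>i j. i \<le> j \<and> j \<le> n \<longrightarrow> M i j \<in> E) \<and>
     (\<forall>i\<le>n. \<exists>x\<in>cObj D. M i i = ie x) \<and>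
     (\<forall>i j. i \<le> j \<and> j \<le> n \<longrightarrow> cDom D (p (M i j)) = cDom D (p (M i i)) \<and> cCod D (p (M i j)) = cDom D (p (M j j))) \<and>
     (\<forall>i j k. i \<le> j \<and> j \<le> k \<and> k \<le> n \<longrightarrow> cComp D (p (M j k)) (p (M i j)) = p (M i k))"

definition Nss :: "('o,'m) cat \<Rightarrow> 'e set \<Rightarrow> ('e \<Rightarrow> 'm) \<Rightarrow> ('o \<Rightarrow> 'e) \<Rightarrow> 'e list sset" where
  "Nss D E p ie = \<lparr> Simp = (\<lambda>n. {enc n M | M. mvalid D E p ie n M}),
     sact = (\<lambda>m n \<theta> l. enc m (\<lambda>i j. (SOME M. l = enc n M) (\<theta> i) (\<theta> j))) \<rparr>"

lemma sact_enc:
  assumes "dmap m n \<theta>"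
  shows "sact (Nss D E p ie) m n \<theta> (enc n M) = enc m (\<lambda>i j. M (\<theta> i) (\<theta> j))"
proof -
  define M' where "M' = (SOME M'. enc n M = enc n M')"
  have "enc n M = enc n M'" unfolding M'_def by (rule someI[where x=M]) simp
  hence e: "\<And>i j. i \<le> j \<Longrightarrow> j \<le> n \<Longrightarrow> M' i j = M i j" unfolding enc_eq by auto
  have "sact (Nss D E p ie) m n \<theta> (enc n M) = enc m (\<lambda>i j. M' (\<theta> i) (\<theta> j))"
    unfolding Nss_def M'_def by simp
  also have "\<dots> = enc m (\<lambda>i j. M (\<theta> i) (\<theta> j))" unfolding enc_eq
    using assms e unfolding dmap_def by auto
  finally show ?thesis .
qed

lemma mvalid_reindex:
  assumes "mvalid D E p ie n M" "dmap m n \<theta>"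
  shows "mvalid D E p ie m (\<lambda>i j. M (\<theta> i) (\<theta> j))"
proof -
  have a: "\<And>i j. i \<le> j \<Longrightarrow> j \<le> m \<Longrightarrow> \<theta> i \<le> \<theta> j \<and> \<theta> j \<le> n"
    using assms(2) unfolding dmap_def by auto
  have v1: "\<And>i j. i \<le> j \<Longrightarrow> j \<le> n \<Longrightarrow> M i j \<in> E"
    and v2: "\<And>i. i \<le> n \<Longrightarrow> \<exists>x\<in>cObj D. M i i = ie x"
    and v3: "\<And>i j. i \<le> j \<Longrightarrow> j \<le> n \<Longrightarrow> cDom D (p (M i j)) = cDom D (p (M i i)) \<and> cCod D (p (M i j)) = cDom D (p (M j j))"
    and v4: "\<And>i j k. i \<le> j \<Longrightarrow> j \<le> k \<Longrightarrow> k \<le> n \<Longrightarrow> cComp D (p (M j k)) (p (M i j)) = p (M i k)"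
    using assms(1) unfolding mvalid_def by blast+
  show ?thesis unfolding mvalid_def
  proof (intro conjI allI impI)
    fix i j assume "i \<le> j \<and> j \<le> m"
    hence "\<theta> i \<le> \<theta> j \<and> \<theta> j \<le> n" using a by blast
    thus "M (\<theta> i) (\<theta> j) \<in> E" "cDom D (p (M (\<theta> i) (\<theta> j))) = cDom D (p (M (\<theta> i) (\<theta> i)))"
      "cCod D (p (M (\<theta> i) (\<theta> j))) = cDom D (p (M (\<theta> j) (\<theta> j)))"
      using v1 v3 by blast+
  next
    fix i assume "i \<le> m"
    hence "\<theta> i \<le> n" using a[of i i] by simp
    thus "\<exists>x\<in>cObj D. M (\<theta> i) (\<theta> i) = ie x" using v2 by blast
  next
    fix i j k assume h: "i \<le> j \<and> j \<le> k \<and> k \<le> m"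
    hence "\<theta> i \<le> \<theta> j \<and> \<theta> j \<le> \<theta> k \<and> \<theta> k \<le> n" using a[of i j] a[of j k] by simp
    thus "cComp D (p (M (\<theta> j) (\<theta> k))) (p (M (\<theta> i) (\<theta> j))) = p (M (\<theta> i) (\<theta> k))"
      using v4 by blast
  qed
qed

lemma Nss_simp: "Simp (Nss D E p ie) n = {enc n M | M. mvalid D E p ie n M}"
  unfolding Nss_def by simp

lemma is_sset_Nss: "is_sset (Nss D E p ie)"
  unfolding is_sset_def
proof (intro conjI allI impI ballI)
  fix m n \<theta> x assume d: "dmap m n \<theta>" and x: "x \<in> Simp (Nss D E p ie) n"
  then obtain M where M: "mvalid D E p ie n M" "x = enc n M" unfolding Nss_simp by auto
  show "sact (Nss D E p ie) m n \<theta> x \<in> Simp (Nss D E p ie) m"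
    unfolding M(2) sact_enc[OF d] Nss_simp using mvalid_reindex[OF M(1) d] by blast
next
  fix n x assume x: "x \<in> Simp (Nss D E p ie) n"
  then obtain M where M: "x = enc n M" unfolding Nss_simp by auto
  have d: "dmap n n id" unfolding dmap_def by auto
  show "sact (Nss D E p ie) n n id x = x" unfolding M sact_enc[OF d] by simp
next
  fix k m n \<phi> \<theta> x assume d: "dmap k m \<phi> \<and> dmap m n \<theta>" and x: "x \<in> Simp (Nss D E p ie) n"
  then obtain M where M: "x = enc n M" unfolding Nss_simp by auto
  have d2: "dmap k n (\<theta> \<circ> \<phi>)" using d unfolding dmap_def by auto
  show "sact (Nss D E p ie) k m \<phi> (sact (Nss D E p ie) m n \<theta> x) = sact (Nss D E p ie) k n (\<theta> \<circ> \<phi>) x"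
    unfolding M sact_enc[OF d2] sact_enc[OF d[THEN conjunct2]] sact_enc[OF d[THEN conjunct1]] by simp
next
  fix m n \<theta> \<theta>' x assume d: "dmap m n \<theta> \<and> dmap m n \<theta>' \<and> (\<forall>i\<le>m. \<theta> i = \<theta>' i)"
    and x: "x \<in> Simp (Nss D E p ie) n"
  then obtain M where M: "x = enc n M" unfolding Nss_simp by auto
  show "sact (Nss D E p ie) m n \<theta> x = sact (Nss D E p ie) m n \<theta>' x"
    unfolding M sact_enc[OF d[THEN conjunct1]] sact_enc[OF d[THEN conjunct2, THEN conjunct1]] enc_eq
  proof (intro allI impI)
    fix i j assume "i \<le> j \<and> j \<le> m"
    hence "\<theta> i = \<theta>' i" "\<theta> j = \<theta>' j" using d by auto
    thus "M (\<theta> i) (\<theta> j) = M (\<theta>' i) (\<theta>' j)" by simp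
  qed
qed



lemma catD:
  assumes "is_category C"
  shows cat_dom: "f \<in> cArr C \<Longrightarrow> cDom C f \<in> cObj C"
    and cat_cod: "f \<in> cArr C \<Longrightarrow> cCod C f \<in> cObj C"
    and cat_id: "x \<in> cObj C \<Longrightarrow> cId C x \<in> cArr C"
    and cat_id_dom: "x \<in> cObj C \<Longrightarrow> cDom C (cId C x) = x"
    and cat_id_cod: "x \<in> cObj C \<Longrightarrow> cCod C (cId C x) = x"
    and cat_comp: "f \<in> cArr C \<Longrightarrow> g \<in> cArr C \<Longrightarrow> cDom C g = cCod C f \<Longrightarrow> cComp C g f \<in> cArr C"
    and cat_comp_dom: "f \<in> cArr C \<Longrightarrow> g \<in> cArr C \<Longrightarrow> cDom C g = cCod C f \<Longrightarrow> cDom C (cComp C g f) = cDom C f"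
    and cat_comp_cod: "f \<in> cArr C \<Longrightarrow> g \<in> cArr C \<Longrightarrow> cDom C g = cCod C f \<Longrightarrow> cCod C (cComp C g f) = cCod C g"
    and cat_idl: "f \<in> cArr C \<Longrightarrow> cComp C (cId C (cCod C f)) f = f"
    and cat_idr: "f \<in> cArr C \<Longrightarrow> cComp C f (cId C (cDom C f)) = f"
    and cat_assoc: "f \<in> cArr C \<Longrightarrow> g \<in> cArr C \<Longrightarrow> h \<in> cArr C \<Longrightarrow> cDom C g = cCod C f \<Longrightarrow> cDom C h = cCod C g \<Longrightarrow>
        cComp C h (cComp C g f) = cComp C (cComp C h g) f"
  using assms unfolding is_category_def by blast+

lemma cat_idid: "is_category C \<Longrightarrow> x \<in> cObj C \<Longrightarrow> cComp C (cId C x) (cId C x) = cId C x"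
  by (metis cat_id cat_id_cod cat_idl)

lemma schain_append: "schain X a (us @ vs) \<longleftrightarrow> schain X a us \<and> schain X (spath_end X a us) vs"
  by (induction us arbitrary: a) auto
lemma spath_end_append: "spath_end X a (us @ vs) = spath_end X (spath_end X a us) vs"
  by (induction us arbitrary: a) auto

lemma le2: "(i::nat) \<le> 2 \<longleftrightarrow> i = 0 \<or> i = 1 \<or> i = 2" by auto
lemma le1: "(i::nat) \<le> 1 \<longleftrightarrow> i = 0 \<or> i = 1" by auto

lemma dm01: "dmap 0 1 (\<lambda>_. 0)" "dmap 0 1 (\<lambda>_. 1)" "dmap 1 0 (\<lambda>_. 0)"
   "dmap 1 2 (\<lambda>j. j + 1)" "dmap 1 2 (\<lambda>j. 2 * j)" "dmap 1 2 (\<lambda>j. j)"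
  unfolding dmap_def by (auto simp: le1)

lemma list1: "[a,b,c] = enc 1 (\<lambda>i j. if j = 0 then a else if i = 0 then b else c)"
  by (simp add: enc1')
lemma list0: "[a] = enc 0 (\<lambda>i j. a)" by (simp add: enc0)
lemma list2: "[a0,a1,a2,a3,a4,a5] = enc 2 (\<lambda>i j. if i = 0 then (if j = 0 then a0 else if j = 1 then a1 else a2)
    else if i = 1 then (if j = 1 then a3 else a4) else a5)"
  by (simp add: enc2)

lemma Nss_ops[simp]:
  "ssrc (Nss D E p ie) [a,b,c] = [a]"
  "stgt (Nss D E p ie) [a,b,c] = [c]"
  "sdegen0 (Nss D E p ie) [a] = [a,a,a]"
  "sface0 (Nss D E p ie) [a0,a1,a2,a3,a4,a5] = [a3,a4,a5]"
  "sface1 (Nss D E p ie) [a0,a1,a2,a3,a4,a5] = [a0,a2,a5]"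
  "sface2 (Nss D E p ie) [a0,a1,a2,a3,a4,a5] = [a0,a1,a3]"
  unfolding ssrc_def stgt_def sdegen0_def sface0_def sface1_def sface2_def
  subgoal by (subst list1, subst sact_enc, rule dm01, simp add: enc0)
  subgoal by (subst list1, subst sact_enc, rule dm01, simp add: enc0)
  subgoal by (subst list0, subst sact_enc, rule dm01, simp add: enc1')
  subgoal by (subst list2, subst sact_enc, rule dm01, simp add: enc1')
  subgoal by (subst list2, subst sact_enc, rule dm01, simp add: enc1')
  subgoal by (subst list2, subst sact_enc, rule dm01, simp add: enc1')
  done

locale nss =
  fixes D :: "('o,'m) cat" and E :: "'e set" and p :: "'e \<Rightarrow> 'm" and ie :: "'o \<Rightarrow> 'e"
  assumes cat: "is_category D"
    and ie_E: "x \<in> cObj D \<Longrightarrow> ie x \<in> E"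
    and p_ie: "x \<in> cObj D \<Longrightarrow> p (ie x) = cId D x"
    and pE: "e \<in> E \<Longrightarrow> p e \<in> cArr D"
    and psurj: "a \<in> cArr D \<Longrightarrow> \<exists>e\<in>E. p e = a"
begin

abbreviation "S \<equiv> Nss D E p ie"

lemma ie_inj: "x \<in> cObj D \<Longrightarrow> y \<in> cObj D \<Longrightarrow> ie x = ie y \<Longrightarrow> x = y"
  by (metis p_ie cat_id_dom[OF cat])

lemma simp0: "l \<in> Simp S 0 \<longleftrightarrow> (\<exists>x\<in>cObj D. l = [ie x])"
proof
  assume "l \<in> Simp S 0"
  then obtain M where "mvalid D E p ie 0 M" "l = enc 0 M" unfolding Nss_simp by auto
  thus "\<exists>x\<in>cObj D. l = [ie x]" unfolding mvalid_def enc0 by auto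
next
  assume "\<exists>x\<in>cObj D. l = [ie x]"
  then obtain x where x: "x \<in> cObj D" "l = [ie x]" by auto
  have "mvalid D E p ie 0 (\<lambda>i j. ie x)" unfolding mvalid_def
    using x ie_E p_ie cat_id[OF cat] cat_idid[OF cat] cat_id_cod[OF cat] cat_id_dom[OF cat] by auto
  thus "l \<in> Simp S 0" unfolding Nss_simp x(2) list0 by blast
qed

lemma mvalidD:
  assumes "mvalid D E p ie n M"
  shows mvE: "i \<le> j \<Longrightarrow> j \<le> n \<Longrightarrow> M i j \<in> E"
    and mvdiag: "i \<le> n \<Longrightarrow> \<exists>x\<in>cObj D. M i i = ie x"
    and mvdom: "i \<le> j \<Longrightarrow> j \<le> n \<Longrightarrow> cDom D (p (M i j)) = cDom D (p (M i i))"
    and mvcod: "i \<le> j \<Longrightarrow> j \<le> n \<Longrightarrow> cCod D (p (M i j)) = cDom D (p (M j j))"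
    and mvcomp: "i \<le> j \<Longrightarrow> j \<le> k \<Longrightarrow> k \<le> n \<Longrightarrow> cComp D (p (M j k)) (p (M i j)) = p (M i k)"
  using assms unfolding mvalid_def by blast+

lemma simp1: "l \<in> Simp S 1 \<longleftrightarrow> (\<exists>x y e. l = [ie x, e, ie y] \<and> x \<in> cObj D \<and> y \<in> cObj D \<and> e \<in> E \<and>
   cDom D (p e) = x \<and> cCod D (p e) = y)"
proof
  assume "l \<in> Simp S 1"
  then obtain M where M: "mvalid D E p ie 1 M" "l = enc 1 M" unfolding Nss_simp by auto
  obtain x where x: "x \<in> cObj D" "M 0 0 = ie x" using mvdiag[OF M(1), of 0] by auto
  obtain y where y: "y \<in> cObj D" "M 1 1 = ie y" using mvdiag[OF M(1), of 1] by auto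
  have "M 0 1 \<in> E" "cDom D (p (M 0 1)) = cDom D (p (M 0 0))" "cCod D (p (M 0 1)) = cDom D (p (M 1 1))"
    using mvE[OF M(1), of 0 1] mvdom[OF M(1), of 0 1] mvcod[OF M(1), of 0 1] by auto
  thus "\<exists>x y e. l = [ie x, e, ie y] \<and> x \<in> cObj D \<and> y \<in> cObj D \<and> e \<in> E \<and> cDom D (p e) = x \<and> cCod D (p e) = y"
    using x y M(2) p_ie cat_id_dom[OF cat] unfolding enc1 by auto
next
  assume "\<exists>x y e. l = [ie x, e, ie y] \<and> x \<in> cObj D \<and> y \<in> cObj D \<and> e \<in> E \<and> cDom D (p e) = x \<and> cCod D (p e) = y"
  then obtain x y e where h: "l = [ie x, e, ie y]" "x \<in> cObj D" "y \<in> cObj D" "e \<in> E" "cDom D (p e) = x" "cCod D (p e) = y"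
    by blast
  define M where "M = (\<lambda>(i::nat) (j::nat). if j = 0 then ie x else if i = 0 then e else ie y)"
  have pe: "p e \<in> cArr D" using pE h by auto
  have f: "p (ie x) = cId D x" "p (ie y) = cId D y" "ie x \<in> E" "ie y \<in> E" "cDom D (cId D x) = x" "cDom D (cId D y) = y"
    "cCod D (cId D x) = x" "cCod D (cId D y) = y"
    "cComp D (cId D x) (cId D x) = cId D x" "cComp D (cId D y) (cId D y) = cId D y"
    "cComp D (p e) (cId D x) = p e" "cComp D (cId D y) (p e) = p e"
    using h ie_E p_ie cat_id_dom[OF cat] cat_id_cod[OF cat] cat_idid[OF cat] cat_idl[OF cat pe] cat_idr[OF cat pe] by auto
  have "mvalid D E p ie 1 M" unfolding mvalid_def le1 M_def
    using h(2-6) f by auto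
  thus "l \<in> Simp S 1" unfolding Nss_simp h(1) list1 M_def by blast
qed

lemma simp2: "s \<in> Simp S 2 \<longleftrightarrow> (\<exists>x y z e1 e2 e3. s = [ie x, e1, e3, ie y, e2, ie z] \<and> x \<in> cObj D \<and> y \<in> cObj D \<and> z \<in> cObj D \<and>
   e1 \<in> E \<and> e2 \<in> E \<and> e3 \<in> E \<and> cDom D (p e1) = x \<and> cCod D (p e1) = y \<and> cDom D (p e2) = y \<and> cCod D (p e2) = z \<and>
   p e3 = cComp D (p e2) (p e1))"
proof
  assume "s \<in> Simp S 2"
  then obtain M where M: "mvalid D E p ie 2 M" "s = enc 2 M" unfolding Nss_simp by auto
  obtain x where x: "x \<in> cObj D" "M 0 0 = ie x" using mvdiag[OF M(1), of 0] by auto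
  obtain y where y: "y \<in> cObj D" "M 1 1 = ie y" using mvdiag[OF M(1), of 1] by auto
  obtain z where z: "z \<in> cObj D" "M 2 2 = ie z" using mvdiag[OF M(1), of 2] by auto
  have "M 0 1 \<in> E" "cDom D (p (M 0 1)) = cDom D (p (M 0 0))" "cCod D (p (M 0 1)) = cDom D (p (M 1 1))"
     "M 1 2 \<in> E" "cDom D (p (M 1 2)) = cDom D (p (M 1 1))" "cCod D (p (M 1 2)) = cDom D (p (M 2 2))"
     "M 0 2 \<in> E" "cComp D (p (M 1 2)) (p (M 0 1)) = p (M 0 2)"
    using mvE[OF M(1), of 0 1] mvdom[OF M(1), of 0 1] mvcod[OF M(1), of 0 1]
      mvE[OF M(1), of 1 2] mvdom[OF M(1), of 1 2] mvcod[OF M(1), of 1 2]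
      mvE[OF M(1), of 0 2] mvcomp[OF M(1), of 0 1 2] by auto
  thus "\<exists>x y z e1 e2 e3. s = [ie x, e1, e3, ie y, e2, ie z] \<and> x \<in> cObj D \<and> y \<in> cObj D \<and> z \<in> cObj D \<and>
   e1 \<in> E \<and> e2 \<in> E \<and> e3 \<in> E \<and> cDom D (p e1) = x \<and> cCod D (p e1) = y \<and> cDom D (p e2) = y \<and> cCod D (p e2) = z \<and>
   p e3 = cComp D (p e2) (p e1)"
    using x y z M(2) p_ie cat_id_dom[OF cat] unfolding enc2 by auto
next
  assume "\<exists>x y z e1 e2 e3. s = [ie x, e1, e3, ie y, e2, ie z] \<and> x \<in> cObj D \<and> y \<in> cObj D \<and> z \<in> cObj D \<and>
   e1 \<in> E \<and> e2 \<in> E \<and> e3 \<in> E \<and> cDom D (p e1) = x \<and> cCod D (p e1) = y \<and> cDom D (p e2) = y \<and> cCod D (p e2) = z \<and>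
   p e3 = cComp D (p e2) (p e1)"
  then obtain x y z e1 e2 e3 where h: "s = [ie x, e1, e3, ie y, e2, ie z]" "x \<in> cObj D" "y \<in> cObj D" "z \<in> cObj D"
   "e1 \<in> E" "e2 \<in> E" "e3 \<in> E" "cDom D (p e1) = x" "cCod D (p e1) = y" "cDom D (p e2) = y" "cCod D (p e2) = z"
   "p e3 = cComp D (p e2) (p e1)"
    by blast
  define M where "M = (\<lambda>(i::nat) (j::nat). if i = 0 then (if j = 0 then ie x else if j = 1 then e1 else e3)
    else if i = 1 then (if j = 1 then ie y else e2) else ie z)"
  note pe = pE[OF h(5)] pE[OF h(6)] pE[OF h(7)]
  have d3: "cDom D (p e3) = x" "cCod D (p e3) = z"
    using h cat_comp_dom[OF cat pe(1,2)] cat_comp_cod[OF cat pe(1,2)] by auto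
  have f: "p (ie x) = cId D x" "p (ie y) = cId D y" "p (ie z) = cId D z" "ie x \<in> E" "ie y \<in> E" "ie z \<in> E"
    "cDom D (cId D x) = x" "cDom D (cId D y) = y" "cDom D (cId D z) = z"
    "cCod D (cId D x) = x" "cCod D (cId D y) = y" "cCod D (cId D z) = z"
    "cComp D (cId D x) (cId D x) = cId D x" "cComp D (cId D y) (cId D y) = cId D y" "cComp D (cId D z) (cId D z) = cId D z"
    "cComp D (p e1) (cId D x) = p e1" "cComp D (cId D y) (p e1) = p e1"
    "cComp D (p e2) (cId D y) = p e2" "cComp D (cId D z) (p e2) = p e2"
    "cComp D (p e3) (cId D x) = p e3" "cComp D (cId D z) (p e3) = p e3"
    using h ie_E p_ie cat_id_dom[OF cat] cat_id_cod[OF cat] cat_idid[OF cat] cat_idl[OF cat pe(1)] cat_idr[OF cat pe(1)]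
      cat_idl[OF cat pe(2)] cat_idr[OF cat pe(2)] cat_idl[OF cat pe(3)] cat_idr[OF cat pe(3)] d3 by auto
  have "mvalid D E p ie 2 M" unfolding mvalid_def le2 M_def
    using h(2-12) f d3 by auto
  thus "s \<in> Simp S 2" unfolding Nss_simp h(1) list2 M_def by blast
qed

end


context nss begin

definition ea :: "'e list \<Rightarrow> 'm" where "ea l = p (l ! 1)"
definition pcf :: "'m \<Rightarrow> 'e list list \<Rightarrow> 'm" where
  "pcf acc ls = foldl (\<lambda>acc l. cComp D (ea l) acc) acc ls"
definition pc :: "'e list \<times> 'e list list \<Rightarrow> 'm" where
  "pc q = pcf (cId D (cDom D (p (hd (fst q))))) (snd q)"

lemma ea3[simp]: "ea [a,b,c] = p b" unfolding ea_def by simp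
lemma pcf_Nil[simp]: "pcf acc [] = acc" unfolding pcf_def by simp
lemma pcf_Cons[simp]: "pcf acc (l # ls) = pcf (cComp D (ea l) acc) ls" unfolding pcf_def by simp
lemma pcf_append: "pcf acc (us @ vs) = pcf (pcf acc us) vs" unfolding pcf_def by simp

lemma pc_simp: "x \<in> cObj D \<Longrightarrow> pc ([ie x], es) = pcf (cId D x) es"
  unfolding pc_def using p_ie cat_id_dom[OF cat] by simp

lemma chain_inv:
  "set es \<subseteq> Simp S 1 \<Longrightarrow> schain S [ie x] es \<Longrightarrow> x \<in> cObj D \<Longrightarrow> acc \<in> cArr D \<Longrightarrow> cCod D acc = x \<Longrightarrow>
   pcf acc es \<in> cArr D \<and> cDom D (pcf acc es) = cDom D acc \<and> spath_end S [ie x] es = [ie (cCod D (pcf acc es))]"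
proof (induction es arbitrary: x acc)
  case Nil
  then show ?case by simp
next
  case (Cons l es)
  from Cons.prems(1) have "l \<in> Simp S 1" by simp
  then obtain x' y e where l: "l = [ie x', e, ie y]" "x' \<in> cObj D" "y \<in> cObj D" "e \<in> E"
    "cDom D (p e) = x'" "cCod D (p e) = y" unfolding simp1 by blast
  have "[ie x'] = [ie x]" using Cons.prems(2) l(1) Nss_ops(1) by simp
  hence xx: "x' = x" using ie_inj l(2) Cons.prems(3) by simp
  have pe: "p e \<in> cArr D" using pE l(4) .
  define acc' where "acc' = cComp D (p e) acc"
  have a': "acc' \<in> cArr D" "cDom D acc' = cDom D acc" "cCod D acc' = y"
    unfolding acc'_def using cat_comp[OF cat Cons.prems(4) pe] cat_comp_dom[OF cat Cons.prems(4) pe]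
      cat_comp_cod[OF cat Cons.prems(4) pe] l xx Cons.prems(5) by auto
  have ch: "schain S [ie y] es" using Cons.prems(2) l(1) Nss_ops(2) by simp
  have IH: "pcf acc' es \<in> cArr D \<and> cDom D (pcf acc' es) = cDom D acc' \<and> spath_end S [ie y] es = [ie (cCod D (pcf acc' es))]"
    using Cons.IH[OF _ ch l(3) a'(1) a'(3)] Cons.prems(1) by simp
  show ?case using IH a'(2) l(1) Nss_ops(2) unfolding acc'_def by simp
qed

lemma vp:
  assumes "valid_path S q"
  shows "\<exists>x\<in>cObj D. fst q = [ie x] \<and> pc q \<in> cArr D \<and> cDom D (pc q) = x \<and>
     spath_end S (fst q) (snd q) = [ie (cCod D (pc q))]"
proof -
  obtain x where x: "x \<in> cObj D" "fst q = [ie x]" using assms unfolding valid_path_def simp0 by auto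
  have "pc q = pcf (cId D x) (snd q)" using pc_simp[OF x(1), of "snd q"] x(2) by (metis prod.collapse)
  thus ?thesis using chain_inv[of "snd q" x "cId D x"] assms x cat_id[OF cat] cat_id_cod[OF cat] cat_id_dom[OF cat]
    unfolding valid_path_def by auto
qed

end


context nss begin

lemma pirel_inv:
  "pirel S q r \<Longrightarrow> valid_path S q \<and> valid_path S r \<and> fst q = fst r \<and> pc q = pc r"
proof (induction rule: pirel.induct)
  case (prefl p)
  then show ?case by simp
next
  case (psym p q)
  then show ?case by simp
next
  case (ptrans p q r)
  then show ?case by simp
next
  case (pid x a us vs)
  obtain x0 where x0: "x0 \<in> cObj D" "x = [ie x0]" using pid.hyps(1) unfolding simp0 by auto
  have d: "sdegen0 S x = [ie x0, ie x0, ie x0]" using x0 by simp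
  obtain w where w: "w \<in> cObj D" "a = [ie w]" using pid.hyps(2) unfolding valid_path_def simp0 by auto
  have v: "set us \<subseteq> Simp S 1" "set vs \<subseteq> Simp S 1" "schain S a us"
      "ssrc S (sdegen0 S x) = spath_end S a us" "schain S (stgt S (sdegen0 S x)) vs"
    using pid.hyps(2) unfolding valid_path_def fst_conv snd_conv schain_append by auto
  have ci: "pcf (cId D w) us \<in> cArr D" "spath_end S [ie w] us = [ie (cCod D (pcf (cId D w) us))]"
    using chain_inv[OF v(1), of w "cId D w"] v(3) w cat_id[OF cat] cat_id_cod[OF cat] by auto
  have "[ie x0] = [ie (cCod D (pcf (cId D w) us))]" using v(4) ci(2) d w(2) by simp
  hence c: "cCod D (pcf (cId D w) us) = x0"
    using ie_inj x0(1) cat_cod[OF cat ci(1)] by auto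
  have "pc (a, us @ [sdegen0 S x] @ vs) = pcf (cComp D (cId D x0) (pcf (cId D w) us)) vs"
    unfolding w(2) pc_simp[OF w(1)] pcf_append d using p_ie[OF x0(1)] by simp
  also have "\<dots> = pc (a, us @ vs)"
    unfolding w(2) pc_simp[OF w(1)] pcf_append using cat_idl[OF cat ci(1)] c by simp
  finally have pceq: "pc (a, us @ [sdegen0 S x] @ vs) = pc (a, us @ vs)" .
  have "valid_path S (a, us @ vs)"
    using pid.hyps(2) v d unfolding valid_path_def fst_conv snd_conv schain_append by auto
  then show ?case using pid.hyps(2) pceq by simp
next
  case (pcomp s a us vs)
  obtain x y z e1 e2 e3 where h: "s = [ie x, e1, e3, ie y, e2, ie z]" "x \<in> cObj D" "y \<in> cObj D" "z \<in> cObj D"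
   "e1 \<in> E" "e2 \<in> E" "e3 \<in> E" "cDom D (p e1) = x" "cCod D (p e1) = y" "cDom D (p e2) = y" "cCod D (p e2) = z"
   "p e3 = cComp D (p e2) (p e1)"
    using pcomp.hyps(1) unfolding simp2 by blast
  note pe = pE[OF h(5)] pE[OF h(6)]
  have fs: "sface2 S s = [ie x, e1, ie y]" "sface0 S s = [ie y, e2, ie z]" "sface1 S s = [ie x, e3, ie z]"
    using h(1) by simp_all
  have d3: "cDom D (p e3) = x" "cCod D (p e3) = z"
    using h cat_comp_dom[OF cat pe] cat_comp_cod[OF cat pe] by auto
  have f1: "[ie x, e3, ie z] \<in> Simp S 1" unfolding simp1 using h d3 by blast
  obtain w where w: "w \<in> cObj D" "a = [ie w]" using pcomp.hyps(2) unfolding valid_path_def simp0 by auto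
  have v: "set us \<subseteq> Simp S 1" "set vs \<subseteq> Simp S 1" "schain S a us"
      "[ie x] = spath_end S a us" "schain S [ie z] vs"
    using pcomp.hyps(2) unfolding valid_path_def fst_conv snd_conv schain_append fs by auto
  have ci: "pcf (cId D w) us \<in> cArr D" "spath_end S [ie w] us = [ie (cCod D (pcf (cId D w) us))]"
    using chain_inv[OF v(1), of w "cId D w"] v(3) w cat_id[OF cat] cat_id_cod[OF cat] by auto
  have "[ie x] = [ie (cCod D (pcf (cId D w) us))]" using v(4) ci(2) w(2) by simp
  hence c: "cCod D (pcf (cId D w) us) = x"
    using ie_inj h(2) cat_cod[OF cat ci(1)] by auto
  have "pc (a, us @ [sface2 S s, sface0 S s] @ vs) = pcf (cComp D (p e2) (cComp D (p e1) (pcf (cId D w) us))) vs"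
    unfolding w(2) pc_simp[OF w(1)] pcf_append fs by simp
  also have "\<dots> = pcf (cComp D (p e3) (pcf (cId D w) us)) vs"
    using cat_assoc[OF cat ci(1) pe] c h by simp
  also have "\<dots> = pc (a, us @ [sface1 S s] @ vs)"
    unfolding w(2) pc_simp[OF w(1)] pcf_append fs by simp
  finally have pceq: "pc (a, us @ [sface2 S s, sface0 S s] @ vs) = pc (a, us @ [sface1 S s] @ vs)" .
  have "valid_path S (a, us @ [sface1 S s] @ vs)"
    using pcomp.hyps(2) v f1 fs unfolding valid_path_def fst_conv snd_conv schain_append by auto
  then show ?case using pcomp.hyps(2) pceq by simp
qed

end


context nss begin

definition can :: "'m \<Rightarrow> 'e list" where
  "can a = [ie (cDom D a), (SOME e. e \<in> E \<and> p e = a), ie (cCod D a)]"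

definition edge :: "'e list \<Rightarrow> bool" where
  "edge l \<longleftrightarrow> l \<in> Simp S 1"

lemma can_props:
  assumes "a \<in> cArr D"
  shows "(SOME e. e \<in> E \<and> p e = a) \<in> E" "p (SOME e. e \<in> E \<and> p e = a) = a"
    "can a \<in> Simp S 1"
proof -
  have "\<exists>e. e \<in> E \<and> p e = a" using psurj[OF assms] by auto
  hence s: "(SOME e. e \<in> E \<and> p e = a) \<in> E \<and> p (SOME e. e \<in> E \<and> p e = a) = a" by (rule someI_ex)
  thus "(SOME e. e \<in> E \<and> p e = a) \<in> E" "p (SOME e. e \<in> E \<and> p e = a) = a" by auto
  show "can a \<in> Simp S 1" unfolding simp1 can_def
    using s cat_dom[OF cat assms] cat_cod[OF cat assms] by auto
qed

lemma vp1: "x \<in> cObj D \<Longrightarrow> [ie x, e, ie y] \<in> Simp S 1 \<Longrightarrow> valid_path S ([ie x], [[ie x, e, ie y]])"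
  unfolding valid_path_def simp0 by auto

lemma swap:
  assumes "x \<in> cObj D" "y \<in> cObj D" "e \<in> E" "e' \<in> E" "cDom D (p e) = x" "cCod D (p e) = y" "p e' = p e"
  shows "pirel S ([ie x], [[ie x, e, ie y]]) ([ie x], [[ie x, e', ie y]])"
proof -
  define s where "s = [ie x, e, e', ie y, ie y, ie y]"
  have pe: "p e \<in> cArr D" using pE assms(3) .
  have s2: "s \<in> Simp S 2" unfolding simp2 s_def
    using assms ie_E p_ie cat_id_dom[OF cat] cat_id_cod[OF cat] cat_idl[OF cat pe] by auto
  have fs: "sface2 S s = [ie x, e, ie y]" "sface0 S s = [ie y, ie y, ie y]" "sface1 S s = [ie x, e', ie y]"
    "sdegen0 S [ie y] = [ie y, ie y, ie y]"
    unfolding s_def by simp_all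
  have e1: "[ie x, e, ie y] \<in> Simp S 1" unfolding simp1 using assms by blast
  have d1: "[ie y, ie y, ie y] \<in> Simp S 1" unfolding simp1 using assms ie_E p_ie cat_id_dom[OF cat] cat_id_cod[OF cat] by auto
  have v2: "valid_path S ([ie x], [ie x, e, ie y] # [[ie y, ie y, ie y]])"
    unfolding valid_path_def simp0 using assms e1 d1 by auto
  have r1: "pirel S ([ie x], [] @ [sface2 S s, sface0 S s] @ []) ([ie x], [] @ [sface1 S s] @ [])"
    by (rule pirel.pcomp[OF s2]) (use v2 fs in simp)
  have r2: "pirel S ([ie x], [[ie x, e, ie y]] @ [sdegen0 S [ie y]] @ []) ([ie x], [[ie x, e, ie y]] @ [])"
    by (rule pirel.pid) (use v2 fs assms(2) simp0 in auto)
  have r1': "pirel S ([ie x], [[ie x, e, ie y], [ie y, ie y, ie y]]) ([ie x], [[ie x, e', ie y]])"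
    using r1 fs by simp
  have r2': "pirel S ([ie x], [[ie x, e, ie y], [ie y, ie y, ie y]]) ([ie x], [[ie x, e, ie y]])"
    using r2 fs by simp
  show ?thesis using pirel.ptrans[OF pirel.psym[OF r2'] r1'] .
qed

lemma canon_ne:
  "valid_path S (a, es) \<Longrightarrow> es \<noteq> [] \<Longrightarrow> pirel S (a, es) (a, [can (pc (a, es))])"
proof (induction "length es" arbitrary: es rule: less_induct)
  case less
  obtain w where w: "w \<in> cObj D" "a = [ie w]" using less.prems(1) unfolding valid_path_def simp0 by auto
  obtain l1 rest where es: "es = l1 # rest" using less.prems(2) by (cases es) auto
  have l1s: "l1 \<in> Simp S 1" using less.prems(1) es unfolding valid_path_def by auto
  then obtain x y e1 where l1: "l1 = [ie x, e1, ie y]" "x \<in> cObj D" "y \<in> cObj D" "e1 \<in> E"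
    "cDom D (p e1) = x" "cCod D (p e1) = y" unfolding simp1 by blast
  have "[ie x] = [ie w]" using less.prems(1) es l1(1) w(2) unfolding valid_path_def by simp
  hence xw: "x = w" using ie_inj l1(2) w(1) by simp
  note pe1 = pE[OF l1(4)]
  show ?case
  proof (cases rest)
    case Nil
    have pceq: "pc (a, es) = p e1" unfolding w(2) pc_simp[OF w(1)] es Nil l1(1)
      using cat_idr[OF cat pe1] l1(5) xw by simp
    have "can (p e1) = [ie x, (SOME e. e \<in> E \<and> p e = p e1), ie y]" unfolding can_def using l1 by simp
    moreover have "pc ([ie x], [[ie x, e1, ie y]]) = p e1" using pceq es Nil w(2) l1(1) xw by simp
    ultimately show ?thesis unfolding es Nil w(2) l1(1) xw[symmetric]
      using swap[OF l1(2,3,4) can_props(1)[OF pe1] l1(5,6) can_props(2)[OF pe1]] by simp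
  next
    case (Cons l2 vs)
    have l2s: "l2 \<in> Simp S 1" using less.prems(1) es Cons unfolding valid_path_def by auto
    then obtain y' z e2 where l2: "l2 = [ie y', e2, ie z]" "y' \<in> cObj D" "z \<in> cObj D" "e2 \<in> E"
      "cDom D (p e2) = y'" "cCod D (p e2) = z" unfolding simp1 by blast
    have "[ie y'] = [ie y]" using less.prems(1) es Cons l1(1) l2(1) unfolding valid_path_def by simp
    hence yy: "y' = y" using ie_inj l2(2) l1(3) by simp
    note pe2 = pE[OF l2(4)]
    define c where "c = cComp D (p e2) (p e1)"
    have c: "c \<in> cArr D" "cDom D c = x" "cCod D c = z"
      unfolding c_def using cat_comp[OF cat pe1 pe2] cat_comp_dom[OF cat pe1 pe2] cat_comp_cod[OF cat pe1 pe2]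
        l1 l2 yy by auto
    define e3 where "e3 = (SOME e. e \<in> E \<and> p e = c)"
    have e3: "e3 \<in> E" "p e3 = c" unfolding e3_def using can_props[OF c(1)] by auto
    define s where "s = [ie x, e1, e3, ie y, e2, ie z]"
    have s2: "s \<in> Simp S 2" unfolding simp2 s_def
      using l1 l2 yy e3 c_def by blast
    have fs: "sface2 S s = l1" "sface0 S s = l2" "sface1 S s = [ie x, e3, ie z]"
      unfolding s_def l1(1) l2(1) yy by simp_all
    have f1: "[ie x, e3, ie z] \<in> Simp S 1" unfolding simp1 using l1 l2 e3 c by auto
    have r1: "pirel S (a, [] @ [sface2 S s, sface0 S s] @ vs) (a, [] @ [sface1 S s] @ vs)"
      by (rule pirel.pcomp[OF s2]) (use less.prems(1) es Cons fs in simp)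
    have v': "valid_path S (a, [ie x, e3, ie z] # vs)"
      using less.prems(1) es Cons f1 l2(1) l1(1) w(2) xw unfolding valid_path_def by simp
    have IH: "pirel S (a, [ie x, e3, ie z] # vs) (a, [can (pc (a, [ie x, e3, ie z] # vs))])"
      using less.hyps[OF _ v'] es Cons by simp
    have pceq: "pc (a, [ie x, e3, ie z] # vs) = pc (a, es)"
      unfolding w(2) pc_simp[OF w(1)] es Cons l1(1) l2(1) using e3 c_def xw
        cat_idr[OF cat pe1] l1(5) cat_idr[OF cat c(1)] c(2) by simp
    have r1': "pirel S (a, es) (a, [ie x, e3, ie z] # vs)" using r1 fs es Cons by simp
    show ?thesis using pirel.ptrans[OF r1' IH[unfolded pceq]] .
  qed
qed

lemma canon: "valid_path S (a, es) \<Longrightarrow> pirel S (a, es) (a, [can (pc (a, es))])"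
proof (cases "es = []")
  case True
  assume v: "valid_path S (a, es)"
  obtain w where w: "w \<in> cObj D" "a = [ie w]" using v unfolding valid_path_def simp0 by auto
  have d: "sdegen0 S a = [ie w, ie w, ie w]" using w by simp
  have d1: "[ie w, ie w, ie w] \<in> Simp S 1" unfolding simp1 using w ie_E p_ie cat_id_dom[OF cat] cat_id_cod[OF cat] by auto
  have vd: "valid_path S (a, [[ie w, ie w, ie w]])" using vp1[OF w(1) d1] w by simp
  have a0: "a \<in> Simp S 0" using v unfolding valid_path_def by simp
  have vd': "valid_path S (a, [] @ [sdegen0 S a] @ [])" using vd d by simp
  have r: "pirel S (a, [] @ [sdegen0 S a] @ []) (a, [] @ [])" by (rule pirel.pid[OF a0 vd'])
  have pc1: "pc (a, [[ie w, ie w, ie w]]) = pc (a, [])"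
    unfolding w(2) pc_simp[OF w(1)] using p_ie[OF w(1)] cat_idid[OF cat w(1)] by simp
  have r': "pirel S (a, []) (a, [[ie w, ie w, ie w]])" using pirel.psym[OF r] d by simp
  have c': "pirel S (a, [[ie w, ie w, ie w]]) (a, [can (pc (a, []))])" using canon_ne[OF vd] pc1 by simp
  show ?thesis using pirel.ptrans[OF r' c'] True by simp
next
  case False
  assume v: "valid_path S (a, es)"
  show ?thesis using canon_ne[OF v False] .
qed

theorem pirel_iff:
  "pirel S q r \<longleftrightarrow> valid_path S q \<and> valid_path S r \<and> fst q = fst r \<and> pc q = pc r"
proof
  assume "pirel S q r" thus "valid_path S q \<and> valid_path S r \<and> fst q = fst r \<and> pc q = pc r" by (rule pirel_inv)
next
  assume h: "valid_path S q \<and> valid_path S r \<and> fst q = fst r \<and> pc q = pc r"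
  obtain a es where q: "q = (a, es)" by (cases q)
  obtain b fs where r: "r = (b, fs)" by (cases r)
  have 1: "pirel S (a, es) (a, [can (pc (a, es))])" using canon[of a es] h q by blast
  have 2: "pirel S (b, fs) (b, [can (pc (b, fs))])" using canon[of b fs] h r by blast
  have e: "a = b" "pc (a, es) = pc (b, fs)" using h q r by auto
  have 3: "pirel S (a, [can (pc (a, es))]) (b, fs)" unfolding e(2) unfolding e(1) by (rule pirel.psym[OF 2])
  show "pirel S q r" using pirel.ptrans[OF 1 3] q r by simp
qed

end


lemma iso_bij:
  assumes C: "is_category C" and F: "is_functor C D Fo Fm"
    and bo: "bij_betw Fo (cObj C) (cObj D)" and bm: "bij_betw Fm (cArr C) (cArr D)"
  shows "iso_functor C D Fo Fm"
proof -
  define Go where "Go = inv_into (cObj C) Fo"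
  define Gm where "Gm = inv_into (cArr C) Fm"
  have Fo: "\<And>x. x \<in> cObj C \<Longrightarrow> Fo x \<in> cObj D" using F unfolding is_functor_def by blast
  have Fm: "\<And>f. f \<in> cArr C \<Longrightarrow> Fm f \<in> cArr D \<and> cDom D (Fm f) = Fo (cDom C f) \<and> cCod D (Fm f) = Fo (cCod C f)"
    using F unfolding is_functor_def by blast
  have Fid: "\<And>x. x \<in> cObj C \<Longrightarrow> Fm (cId C x) = cId D (Fo x)" using F unfolding is_functor_def by blast
  have Fc: "\<And>f g. f \<in> cArr C \<Longrightarrow> g \<in> cArr C \<Longrightarrow> cDom C g = cCod C f \<Longrightarrow> Fm (cComp C g f) = cComp D (Fm g) (Fm f)"
    using F unfolding is_functor_def by blast
  have Go1: "\<And>x. x \<in> cObj C \<Longrightarrow> Go (Fo x) = x" unfolding Go_def using bo bij_betw_inv_into_left by fast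
  have Go2: "\<And>y. y \<in> cObj D \<Longrightarrow> Fo (Go y) = y" unfolding Go_def using bo bij_betw_inv_into_right by fast
  have Go3: "\<And>y. y \<in> cObj D \<Longrightarrow> Go y \<in> cObj C" unfolding Go_def using bo
    by (metis bij_betw_def inv_into_into)
  have Gm1: "\<And>x. x \<in> cArr C \<Longrightarrow> Gm (Fm x) = x" unfolding Gm_def using bm bij_betw_inv_into_left by fast
  have Gm2: "\<And>y. y \<in> cArr D \<Longrightarrow> Fm (Gm y) = y" unfolding Gm_def using bm bij_betw_inv_into_right by fast
  have Gm3: "\<And>y. y \<in> cArr D \<Longrightarrow> Gm y \<in> cArr C" unfolding Gm_def using bm
    by (metis bij_betw_def inv_into_into)
  have Gdom: "\<And>g. g \<in> cArr D \<Longrightarrow> cDom C (Gm g) = Go (cDom D g)"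
    by (metis Fm Gm2 Gm3 Go1 cat_dom[OF C])
  have Gcod: "\<And>g. g \<in> cArr D \<Longrightarrow> cCod C (Gm g) = Go (cCod D g)"
    by (metis Fm Gm2 Gm3 Go1 cat_cod[OF C])
  have "is_functor D C Go Gm" unfolding is_functor_def
  proof (intro conjI ballI impI)
    fix x assume "x \<in> cObj D" thus "Go x \<in> cObj C" by (rule Go3)
  next
    fix f assume "f \<in> cArr D" thus "Gm f \<in> cArr C" "cDom C (Gm f) = Go (cDom D f)" "cCod C (Gm f) = Go (cCod D f)"
      using Gm3 Gdom Gcod by auto
  next
    fix x assume x: "x \<in> cObj D"
    have "Fm (cId C (Go x)) = cId D x" using Fid[OF Go3[OF x]] Go2[OF x] by simp
    thus "Gm (cId D x) = cId C (Go x)" using Gm1 cat_id[OF C Go3[OF x]] by metis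
  next
    fix f g assume f: "f \<in> cArr D" and g: "g \<in> cArr D" and fg: "cDom D g = cCod D f"
    have c: "cDom C (Gm g) = cCod C (Gm f)" using Gdom[OF g] Gcod[OF f] fg by simp
    have "Fm (cComp C (Gm g) (Gm f)) = cComp D g f" using Fc[OF Gm3[OF f] Gm3[OF g] c] Gm2 f g by simp
    thus "Gm (cComp D g f) = cComp C (Gm g) (Gm f)" using Gm1 cat_comp[OF C Gm3[OF f] Gm3[OF g] c] by metis
  qed
  thus ?thesis unfolding iso_functor_def using F Go1 Go2 Gm1 Gm2 by blast
qed

context nss begin

lemma pcf_shift:
  "set vs \<subseteq> Simp S 1 \<Longrightarrow> schain S [ie y] vs \<Longrightarrow> y \<in> cObj D \<Longrightarrow> acc \<in> cArr D \<Longrightarrow> cCod D acc = y \<Longrightarrow>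
   pcf acc vs = cComp D (pcf (cId D y) vs) acc"
proof (induction vs arbitrary: y acc)
  case Nil
  then show ?case using cat_idl[OF cat Nil.prems(4)] by simp
next
  case (Cons l vs)
  from Cons.prems(1) have "l \<in> Simp S 1" by simp
  then obtain x' z e where l: "l = [ie x', e, ie z]" "x' \<in> cObj D" "z \<in> cObj D" "e \<in> E"
    "cDom D (p e) = x'" "cCod D (p e) = z" unfolding simp1 by blast
  have "[ie x'] = [ie y]" using Cons.prems(2) l(1) by simp
  hence xx: "x' = y" using ie_inj l(2) Cons.prems(3) by simp
  note pe = pE[OF l(4)]
  have ch: "schain S [ie z] vs" using Cons.prems(2) l(1) by simp
  have c1: "cComp D (p e) acc \<in> cArr D" "cCod D (cComp D (p e) acc) = z"
    using cat_comp[OF cat Cons.prems(4) pe] cat_comp_cod[OF cat Cons.prems(4) pe] l xx Cons.prems(5) by auto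
  have IH1: "pcf (cComp D (p e) acc) vs = cComp D (pcf (cId D z) vs) (cComp D (p e) acc)"
    using Cons.IH[OF _ ch l(3) c1] Cons.prems(1) by simp
  have IH2: "pcf (p e) vs = cComp D (pcf (cId D z) vs) (p e)"
    using Cons.IH[OF _ ch l(3) pe l(6)] Cons.prems(1) by simp
  have pz: "pcf (cId D z) vs \<in> cArr D" "cDom D (pcf (cId D z) vs) = z"
    using chain_inv[OF _ ch l(3), of "cId D z"] Cons.prems(1) cat_id[OF cat l(3)] cat_id_cod[OF cat l(3)]
      cat_id_dom[OF cat l(3)] by auto
  have "pcf acc (l # vs) = cComp D (pcf (cId D z) vs) (cComp D (p e) acc)" using IH1 l(1) by simp
  also have "\<dots> = cComp D (cComp D (pcf (cId D z) vs) (p e)) acc"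
    using cat_assoc[OF cat Cons.prems(4) pe pz(1)] l xx Cons.prems(5) pz(2) by simp
  also have "\<dots> = cComp D (pcf (cId D y) (l # vs)) acc"
    using IH2 l(1) xx cat_idr[OF cat pe] l(5) by simp
  finally show ?case .
qed

lemma pc_append:
  assumes "valid_path S (a, us)" "valid_path S (spath_end S a us, vs)"
  shows "valid_path S (a, us @ vs)" "pc (a, us @ vs) = cComp D (pc (spath_end S a us, vs)) (pc (a, us))"
proof -
  show "valid_path S (a, us @ vs)" using assms unfolding valid_path_def by (auto simp: schain_append)
  obtain x where x: "x \<in> cObj D" "a = [ie x]" "pc (a, us) \<in> cArr D"
     "spath_end S a us = [ie (cCod D (pc (a, us)))]" using vp[OF assms(1)] by auto
  have y: "cCod D (pc (a, us)) \<in> cObj D" using cat_cod[OF cat x(3)] .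
  have "pc (a, us @ vs) = pcf (pc (a, us)) vs" unfolding x(2) pc_simp[OF x(1)] pcf_append ..
  also have "\<dots> = cComp D (pcf (cId D (cCod D (pc (a, us)))) vs) (pc (a, us))"
    by (rule pcf_shift) (use assms(2) x y in \<open>auto simp: valid_path_def\<close>)
  also have "\<dots> = cComp D (pc (spath_end S a us, vs)) (pc (a, us))"
    unfolding x(4) pc_simp[OF y] ..
  finally show "pc (a, us @ vs) = cComp D (pc (spath_end S a us, vs)) (pc (a, us))" .
qed

lemma cls_mem: "valid_path S q \<Longrightarrow> q \<in> pi_class S q"
  unfolding pi_class_def by (simp add: pirel.prefl)

lemma cls_eq: "valid_path S q \<Longrightarrow> pirel S q r \<Longrightarrow> pi_class S q = pi_class S r"
  unfolding pi_class_def by (auto intro: pirel.ptrans pirel.psym)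

lemma cls_eq_iff: "valid_path S q \<Longrightarrow> valid_path S r \<Longrightarrow> pi_class S q = pi_class S r \<longleftrightarrow> pirel S q r"
  using cls_eq cls_mem unfolding pi_class_def by blast

lemma cls_some:
  assumes "valid_path S q"
  shows "pirel S q (SOME r. r \<in> pi_class S q)"
proof -
  have "(SOME r. r \<in> pi_class S q) \<in> pi_class S q" using cls_mem[OF assms] by (rule someI)
  thus ?thesis unfolding pi_class_def by simp
qed

lemma Pi_dom: "valid_path S q \<Longrightarrow> cDom (Pi_cat S) (pi_class S q) = fst q"
  unfolding Pi_cat_def using cls_some pirel_inv by fastforce

lemma Pi_cod: "valid_path S q \<Longrightarrow> cCod (Pi_cat S) (pi_class S q) = [ie (cCod D (pc q))]"
proof -
  assume v: "valid_path S q"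
  define r where "r = (SOME r. r \<in> pi_class S q)"
  have r: "valid_path S r" "fst r = fst q" "pc r = pc q" using pirel_inv[OF cls_some[OF v]] unfolding r_def by auto
  have "cCod (Pi_cat S) (pi_class S q) = spath_end S (fst r) (snd r)" unfolding Pi_cat_def r_def by (simp add: Let_def)
  also have "\<dots> = [ie (cCod D (pc q))]" using vp[OF r(1)] r by auto
  finally show ?thesis .
qed

lemma Pi_comp:
  assumes "valid_path S q" "valid_path S r" "fst r = [ie (cCod D (pc q))]"
  shows "cComp (Pi_cat S) (pi_class S r) (pi_class S q) = pi_class S (fst q, snd q @ snd r)"
    "valid_path S (fst q, snd q @ snd r)"
    "pc (fst q, snd q @ snd r) = cComp D (pc r) (pc q)"
proof -
  define q' where "q' = (SOME t. t \<in> pi_class S q)"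
  define r' where "r' = (SOME t. t \<in> pi_class S r)"
  have q': "valid_path S q'" "fst q' = fst q" "pc q' = pc q" using pirel_inv[OF cls_some[OF assms(1)]] unfolding q'_def by auto
  have r': "valid_path S r'" "fst r' = fst r" "pc r' = pc r" using pirel_inv[OF cls_some[OF assms(2)]] unfolding r'_def by auto
  have e: "spath_end S (fst q') (snd q') = fst r'" using vp[OF q'(1)] q' r' assms(3) by auto
  have v1: "valid_path S (fst q', snd q')" using q'(1) by simp
  have v2: "valid_path S (spath_end S (fst q') (snd q'), snd r')" using r'(1) e by simp
  have e': "spath_end S (fst q) (snd q) = fst r" using vp[OF assms(1)] assms(3) by auto
  have w1: "valid_path S (fst q, snd q)" using assms(1) by simp
  have w2: "valid_path S (spath_end S (fst q) (snd q), snd r)" using assms(2) e' by simp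
  have "cComp (Pi_cat S) (pi_class S r) (pi_class S q) = pi_class S (fst q', snd q' @ snd r')"
    unfolding Pi_cat_def q'_def r'_def by (simp add: Let_def)
  also have "\<dots> = pi_class S (fst q, snd q @ snd r)"
  proof (rule cls_eq)
    show "valid_path S (fst q', snd q' @ snd r')" using pc_append(1)[OF v1 v2] .
    show "pirel S (fst q', snd q' @ snd r') (fst q, snd q @ snd r)"
    proof -
      have c: "(fst q, snd q') = q'" "(fst r, snd r') = r'" using q'(2) r'(2) by (metis prod.collapse)+
      show ?thesis unfolding pirel_iff using pc_append[OF v1 v2] pc_append[OF w1 w2] q' r' e e' c by simp
    qed
  qed
  finally show "cComp (Pi_cat S) (pi_class S r) (pi_class S q) = pi_class S (fst q, snd q @ snd r)" .
  show "valid_path S (fst q, snd q @ snd r)" using pc_append(1)[OF w1 w2] .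
  show "pc (fst q, snd q @ snd r) = cComp D (pc r) (pc q)" using pc_append(2)[OF w1 w2] e' by (metis prod.collapse)
qed

end


context nss begin

definition Phio :: "'o \<Rightarrow> 'e list" where "Phio x = [ie x]"
definition Phim :: "'m \<Rightarrow> ('e list \<times> 'e list list) set" where
  "Phim a = pi_class S ([ie (cDom D a)], [can a])"

lemma can_path:
  assumes "a \<in> cArr D"
  shows "valid_path S ([ie (cDom D a)], [can a])" "pc ([ie (cDom D a)], [can a]) = a"
proof -
  have x: "cDom D a \<in> cObj D" using cat_dom[OF cat assms] .
  have c: "can a \<in> Simp S 1" using can_props(3)[OF assms] .
  show "valid_path S ([ie (cDom D a)], [can a])" unfolding valid_path_def simp0
    using x c unfolding can_def by auto
  show "pc ([ie (cDom D a)], [can a]) = a" unfolding pc_simp[OF x]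
    using can_props(2)[OF assms] cat_idr[OF cat assms] unfolding can_def by simp
qed

lemma Pi_obj_eq: "cObj (Pi_cat S) = Simp S 0" unfolding Pi_cat_def by simp
lemma Pi_arr_eq: "cArr (Pi_cat S) = {pi_class S q | q. valid_path S q}" unfolding Pi_cat_def by simp
lemma Pi_id_eq: "cId (Pi_cat S) v = pi_class S (v, [])" unfolding Pi_cat_def by simp

theorem Phi_iso: "iso_functor D (Pi_cat S) Phio Phim"
proof (rule iso_bij[OF cat])
  show "is_functor D (Pi_cat S) Phio Phim" unfolding is_functor_def
  proof (intro conjI ballI impI)
    fix x assume "x \<in> cObj D" thus "Phio x \<in> cObj (Pi_cat S)" unfolding Pi_obj_eq simp0 Phio_def by auto
  next
    fix f assume f: "f \<in> cArr D"
    note cp = can_path[OF f]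
    show "Phim f \<in> cArr (Pi_cat S)" unfolding Pi_arr_eq Phim_def using cp by blast
    show "cDom (Pi_cat S) (Phim f) = Phio (cDom D f)" unfolding Phim_def Phio_def Pi_dom[OF cp(1)] by simp
    show "cCod (Pi_cat S) (Phim f) = Phio (cCod D f)" unfolding Phim_def Phio_def Pi_cod[OF cp(1)] cp(2) ..
  next
    fix x assume x: "x \<in> cObj D"
    have ix: "cId D x \<in> cArr D" using cat_id[OF cat x] .
    note cp = can_path[OF ix]
    have v0: "valid_path S ([ie x], [])" unfolding valid_path_def simp0 using x by auto
    show "Phim (cId D x) = cId (Pi_cat S) (Phio x)" unfolding Phim_def Phio_def Pi_id_eq
      using cls_eq_iff[OF cp(1) v0] cp v0 pirel_iff cat_id_dom[OF cat x] pc_simp[OF x] by simp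
  next
    fix f g assume f: "f \<in> cArr D" and g: "g \<in> cArr D" and fg: "cDom D g = cCod D f"
    note cf = can_path[OF f] and cg = can_path[OF g]
    have gf: "cComp D g f \<in> cArr D" using cat_comp[OF cat f g fg] .
    note cgf = can_path[OF gf]
    have fr: "fst ([ie (cDom D g)], [can g]) = [ie (cCod D (pc ([ie (cDom D f)], [can f])))]" using cf fg by simp
    note pcm = Pi_comp[OF cf(1) cg(1) fr]
    have "cComp (Pi_cat S) (Phim g) (Phim f) = pi_class S ([ie (cDom D f)], [can f] @ [can g])"
      unfolding Phim_def using pcm(1) by simp
    also have "\<dots> = Phim (cComp D g f)" unfolding Phim_def
    proof (rule cls_eq)
      show "valid_path S ([ie (cDom D f)], [can f] @ [can g])" using pcm(2) by simp
      show "pirel S ([ie (cDom D f)], [can f] @ [can g]) ([ie (cDom D (cComp D g f))], [can (cComp D g f)])"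
        unfolding pirel_iff using pcm(2,3) cgf cf cg cat_comp_dom[OF cat f g fg] by simp
    qed
    finally show "Phim (cComp D g f) = cComp (Pi_cat S) (Phim g) (Phim f)" ..
  qed
next
  have "Phio ` cObj D = Simp S 0" unfolding Phio_def using simp0 by auto
  thus "bij_betw Phio (cObj D) (cObj (Pi_cat S))" unfolding bij_betw_def inj_on_def Pi_obj_eq
    using ie_inj unfolding Phio_def by auto
next
  show "bij_betw Phim (cArr D) (cArr (Pi_cat S))" unfolding bij_betw_def inj_on_def
  proof (intro conjI ballI impI)
    fix a b assume a: "a \<in> cArr D" and b: "b \<in> cArr D" and e: "Phim a = Phim b"
    have "pirel S ([ie (cDom D a)], [can a]) ([ie (cDom D b)], [can b])"
      using e cls_eq_iff[OF can_path(1)[OF a] can_path(1)[OF b]] unfolding Phim_def by simp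
    thus "a = b" unfolding pirel_iff using can_path(2)[OF a] can_path(2)[OF b] by simp
  next
    show "Phim ` cArr D = cArr (Pi_cat S)"
    proof
      show "Phim ` cArr D \<subseteq> cArr (Pi_cat S)" unfolding Pi_arr_eq Phim_def using can_path by blast
    next
      show "cArr (Pi_cat S) \<subseteq> Phim ` cArr D"
      proof
        fix c assume "c \<in> cArr (Pi_cat S)"
        then obtain q where q: "valid_path S q" "c = pi_class S q" unfolding Pi_arr_eq by blast
        obtain x where x: "x \<in> cObj D" "fst q = [ie x]" "pc q \<in> cArr D" "cDom D (pc q) = x" using vp[OF q(1)] by blast
        note cp = can_path[OF x(3)]
        have "Phim (pc q) = c" unfolding Phim_def q(2)
        proof (rule cls_eq[OF cp(1)])
          show "pirel S ([ie (cDom D (pc q))], [can (pc q)]) q" unfolding pirel_iff using cp q(1) x by simp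
        qed
        thus "c \<in> Phim ` cArr D" using x(3) by blast
      qed
    qed
  qed
qed

end


lemma smapD:
  assumes "is_smap X Y g"
  shows "x \<in> Simp X n \<Longrightarrow> g n x \<in> Simp Y n"
    and "dmap m n \<theta> \<Longrightarrow> x \<in> Simp X n \<Longrightarrow> g m (sact X m n \<theta> x) = sact Y m n \<theta> (g n x)"
  using assms unfolding is_smap_def by blast+

lemma smap_ops:
  assumes "is_smap X Y g"
  shows "e \<in> Simp X 1 \<Longrightarrow> g 0 (ssrc X e) = ssrc Y (g 1 e)"
    and "e \<in> Simp X 1 \<Longrightarrow> g 0 (stgt X e) = stgt Y (g 1 e)"
    and "x \<in> Simp X 0 \<Longrightarrow> g 1 (sdegen0 X x) = sdegen0 Y (g 0 x)"
    and "s \<in> Simp X 2 \<Longrightarrow> g 1 (sface0 X s) = sface0 Y (g 2 s)"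
    and "s \<in> Simp X 2 \<Longrightarrow> g 1 (sface1 X s) = sface1 Y (g 2 s)"
    and "s \<in> Simp X 2 \<Longrightarrow> g 1 (sface2 X s) = sface2 Y (g 2 s)"
  unfolding ssrc_def stgt_def sdegen0_def sface0_def sface1_def sface2_def
  using smapD(2)[OF assms dm01(1)] smapD(2)[OF assms dm01(2)] smapD(2)[OF assms dm01(3)]
    smapD(2)[OF assms dm01(4)] smapD(2)[OF assms dm01(5)] smapD(2)[OF assms dm01(6)]
  by auto

definition gpath :: "(nat \<Rightarrow> 'a \<Rightarrow> 'b) \<Rightarrow> 'a \<times> 'a list \<Rightarrow> 'b \<times> 'b list" where
  "gpath g q = (g 0 (fst q), map (g 1) (snd q))"

lemma smap_schain:
  assumes "is_smap X Y g"
  shows "set es \<subseteq> Simp X 1 \<Longrightarrow> schain X a es \<Longrightarrow> schain Y (g 0 a) (map (g 1) es)"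
proof (induction es arbitrary: a)
  case Nil thus ?case by simp
next
  case (Cons e es)
  have h: "e \<in> Simp X 1" "set es \<subseteq> Simp X 1" "schain X (stgt X e) es" "a = ssrc X e" using Cons.prems by auto
  have IH: "schain Y (g 0 (stgt X e)) (map (g 1) es)" using Cons.IH[OF h(2,3)] .
  show ?case using IH h smap_ops(1,2)[OF assms h(1)] by simp
qed

lemma smap_valid:
  assumes "is_smap X Y g" "valid_path X q"
  shows "valid_path Y (gpath g q)"
  using assms(2) smapD(1)[OF assms(1)] smap_schain[OF assms(1)] unfolding valid_path_def gpath_def by auto

lemma smap_pirel:
  assumes "is_smap X Y g"
  shows "pirel X q r \<Longrightarrow> pirel Y (gpath g q) (gpath g r)"
proof (induction rule: pirel.induct)
  case (prefl p) thus ?case using smap_valid[OF assms] pirel.prefl by blast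
next
  case (psym p q) thus ?case using pirel.psym by blast
next
  case (ptrans p q r) thus ?case using pirel.ptrans by blast
next
  case (pid x a us vs)
  have x: "g 0 x \<in> Simp Y 0" using smapD(1)[OF assms pid.hyps(1)] .
  have v: "valid_path Y (g 0 a, map (g 1) us @ [sdegen0 Y (g 0 x)] @ map (g 1) vs)"
    using smap_valid[OF assms pid.hyps(2)] smap_ops(3)[OF assms pid.hyps(1)] unfolding gpath_def by simp
  show ?case using pirel.pid[OF x v] smap_ops(3)[OF assms pid.hyps(1)] unfolding gpath_def by simp
next
  case (pcomp s a us vs)
  have s: "g 2 s \<in> Simp Y 2" using smapD(1)[OF assms pcomp.hyps(1)] .
  have v: "valid_path Y (g 0 a, map (g 1) us @ [sface2 Y (g 2 s), sface0 Y (g 2 s)] @ map (g 1) vs)"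
    using smap_valid[OF assms pcomp.hyps(2)] smap_ops(4,6)[OF assms pcomp.hyps(1)] unfolding gpath_def by simp
  show ?case using pirel.pcomp[OF s v] smap_ops(4,5,6)[OF assms pcomp.hyps(1)] unfolding gpath_def by simp
qed

lemma converse:
  assumes F: "is_functor A B fo fm" and g: "is_smono X Y g"
    and ai: "arrow_iso A B fo fm (Pi_cat X) (Pi_cat Y) (Pi_obj g) (Pi_arr Y g)"
  shows "inj_on fo (cObj A)"
proof -
  obtain ao am bo bm where i1: "iso_functor A (Pi_cat X) ao am" and i2: "iso_functor B (Pi_cat Y) bo bm"
    and c: "\<forall>x\<in>cObj A. Pi_obj g (ao x) = bo (fo x)" using ai unfolding arrow_iso_def by blast
  obtain Go where Go: "\<forall>x\<in>cObj A. Go (ao x) = x" using i1 unfolding iso_functor_def by blast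
  have ao: "\<And>x. x \<in> cObj A \<Longrightarrow> ao x \<in> Simp X 0" using i1 unfolding iso_functor_def is_functor_def Pi_cat_def by auto
  have fo: "\<And>x. x \<in> cObj A \<Longrightarrow> fo x \<in> cObj B" using F unfolding is_functor_def by blast
  have inj0: "inj_on (g 0) (Simp X 0)" using g unfolding is_smono_def by blast
  show ?thesis unfolding inj_on_def
  proof (intro ballI impI)
    fix x y assume x: "x \<in> cObj A" and y: "y \<in> cObj A" and e: "fo x = fo y"
    have "g 0 (ao x) = g 0 (ao y)" using c x y e unfolding Pi_obj_def by metis
    hence "ao x = ao y" using inj0 ao[OF x] ao[OF y] unfolding inj_on_def by blast
    thus "x = y" using Go x y by metis
  qed
qed



definition inA :: "'am \<Rightarrow> ('ao + 'bo + 'am + 'bm + nat)" where "inA a = Inr (Inr (Inl a))"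
definition inB :: "'bm \<Rightarrow> ('ao + 'bo + 'am + 'bm + nat)" where "inB b = Inr (Inr (Inr (Inl b)))"
definition outA :: "('ao + 'bo + 'am + 'bm + nat) \<Rightarrow> 'am" where
  "outA e = (case e of Inr (Inr (Inl a)) \<Rightarrow> a | _ \<Rightarrow> undefined)"
definition pYm :: "('am \<Rightarrow> 'bm) \<Rightarrow> ('ao + 'bo + 'am + 'bm + nat) \<Rightarrow> 'bm" where
  "pYm fm e = (case e of Inr (Inr (Inl a)) \<Rightarrow> fm a | Inr (Inr (Inr (Inl b))) \<Rightarrow> b | _ \<Rightarrow> undefined)"
definition hh :: "('ao, 'am) cat \<Rightarrow> ('bo, 'bm) cat \<Rightarrow> ('ao \<Rightarrow> 'bo) \<Rightarrow> ('ao + 'bo + 'am + 'bm + nat) \<Rightarrow> ('ao + 'bo + 'am + 'bm + nat)" where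
  "hh A B fo e = (case e of Inr (Inr (Inl a)) \<Rightarrow> (if a = cId A (cDom A a) then inB (cId B (fo (cDom A a))) else e) | _ \<Rightarrow> e)"

lemma in_simps[simp]:
  "outA (inA a) = a" "pYm fm (inA a) = fm a" "pYm fm (inB b) = b"
  "hh A B fo (inA a) = (if a = cId A (cDom A a) then inB (cId B (fo (cDom A a))) else inA a)"
  "inA a \<noteq> inB b" "inB b \<noteq> inA a" "inA a = inA a' \<longleftrightarrow> a = a'" "inB b = inB b' \<longleftrightarrow> b = b'"
  unfolding inA_def inB_def outA_def pYm_def hh_def by auto

lemma functorD:
  assumes "is_functor A B fo fm"
  shows "x \<in> cObj A \<Longrightarrow> fo x \<in> cObj B"
    and "f \<in> cArr A \<Longrightarrow> fm f \<in> cArr B"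
    and "f \<in> cArr A \<Longrightarrow> cDom B (fm f) = fo (cDom A f)"
    and "f \<in> cArr A \<Longrightarrow> cCod B (fm f) = fo (cCod A f)"
    and "x \<in> cObj A \<Longrightarrow> fm (cId A x) = cId B (fo x)"
    and "f \<in> cArr A \<Longrightarrow> g \<in> cArr A \<Longrightarrow> cDom A g = cCod A f \<Longrightarrow> fm (cComp A g f) = cComp B (fm g) (fm f)"
  using assms unfolding is_functor_def by blast+

lemma enc_map: "map h (enc n M) = enc n (\<lambda>i j. h (M i j))"
  unfolding enc_def by (induction "pairs n") auto

lemma forward:
  fixes A :: "('ao, 'am) cat" and B :: "('bo, 'bm) cat"
    and fo :: "'ao \<Rightarrow> 'bo" and fm :: "'am \<Rightarrow> 'bm"
  assumes cA: "is_category A" and cB: "is_category B" and F: "is_functor A B fo fm"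
    and inj: "inj_on fo (cObj A)"
  shows "\<exists>(X :: ('ao, 'bo, 'am, 'bm) wit sset) (Y :: ('ao, 'bo, 'am, 'bm) wit sset) g.
              is_sset X \<and> is_sset Y \<and> is_smono X Y g \<and>
              arrow_iso A B fo fm (Pi_cat X) (Pi_cat Y) (Pi_obj g) (Pi_arr Y g)"
proof -
  note fD = functorD[OF F]
  define EXa :: "('ao + 'bo + 'am + 'bm + nat) set" where "EXa = inA ` cArr A"
  define ieX :: "'ao \<Rightarrow> ('ao + 'bo + 'am + 'bm + nat)" where "ieX x = inA (cId A x)" for x
  define EYb :: "('ao + 'bo + 'am + 'bm + nat) set" where "EYb = inA ` cArr A \<union> inB ` cArr B"
  define ieY :: "'bo \<Rightarrow> ('ao + 'bo + 'am + 'bm + nat)" where "ieY y = inB (cId B y)" for y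
  interpret X: nss A EXa outA ieX
    by unfold_locales (auto simp: EXa_def ieX_def cA cat_id[OF cA])
  interpret Y: nss B EYb "pYm fm" ieY
  proof unfold_locales
    fix b assume "b \<in> cArr B" thus "\<exists>e\<in>EYb. pYm fm e = b" unfolding EYb_def by (intro bexI[of _ "inB b"]) auto
  qed (auto simp: EYb_def ieY_def cB cat_id[OF cB] fD(2))
  define h where "h = hh A B fo"
  define g :: "nat \<Rightarrow> ('ao, 'bo, 'am, 'bm) wit \<Rightarrow> ('ao, 'bo, 'am, 'bm) wit" where "g = (\<lambda>n l. map h l)"
  have hE: "\<And>e. e \<in> EXa \<Longrightarrow> h e \<in> EYb \<and> pYm fm (h e) = fm (outA e)"
  proof -
    fix e assume "e \<in> EXa"
    then obtain a where a: "a \<in> cArr A" "e = inA a" unfolding EXa_def by auto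
    show "h e \<in> EYb \<and> pYm fm (h e) = fm (outA e)"
    proof (cases "a = cId A (cDom A a)")
      case True
      have d: "cDom A a \<in> cObj A" using cat_dom[OF cA a(1)] .
      have "fm a = cId B (fo (cDom A a))" using fD(5)[OF d] True by metis
      thus ?thesis using True a d fD(1) cat_id[OF cB] unfolding h_def EYb_def by auto
    next
      case False
      thus ?thesis using a unfolding h_def EYb_def by auto
    qed
  qed
  have hie: "\<And>x. x \<in> cObj A \<Longrightarrow> h (ieX x) = ieY (fo x)"
    unfolding h_def ieX_def ieY_def using cat_id_dom[OF cA] by simp
  have hinj: "inj_on h EXa" unfolding inj_on_def
  proof (intro ballI impI)
    fix e1 e2 assume e1: "e1 \<in> EXa" and e2: "e2 \<in> EXa" and e: "h e1 = h e2"
    obtain a where a: "a \<in> cArr A" "e1 = inA a" using e1 unfolding EXa_def by auto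
    obtain b where b: "b \<in> cArr A" "e2 = inA b" using e2 unfolding EXa_def by auto
    have da: "cDom A a \<in> cObj A" using cat_dom[OF cA a(1)] .
    have db: "cDom A b \<in> cObj A" using cat_dom[OF cA b(1)] .
    show "e1 = e2"
    proof (cases "a = cId A (cDom A a)"; cases "b = cId A (cDom A b)")
      assume ia: "a = cId A (cDom A a)" and ib: "b = cId A (cDom A b)"
      have "cId B (fo (cDom A a)) = cId B (fo (cDom A b))" using e a b ia ib unfolding h_def by (simp del: hh_def)
      hence "cDom B (cId B (fo (cDom A a))) = cDom B (cId B (fo (cDom A b)))" by simp
      hence "fo (cDom A a) = fo (cDom A b)" using cat_id_dom[OF cB] fD(1) da db by simp
      hence "cDom A a = cDom A b" using inj da db unfolding inj_on_def by blast
      thus ?thesis using ia ib a b by metis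
    qed (use e a b in \<open>auto simp: h_def\<close>)
  qed
  have mv: "\<And>n M. mvalid A EXa outA ieX n M \<Longrightarrow> mvalid B EYb (pYm fm) ieY n (\<lambda>i j. h (M i j))"
  proof -
    fix n M assume M: "mvalid A EXa outA ieX n M"
    note mE = X.mvE[OF M] and md = X.mvdiag[OF M] and mdo = X.mvdom[OF M] and mco = X.mvcod[OF M]
      and mc = X.mvcomp[OF M]
    have arr: "\<And>i j. i \<le> j \<Longrightarrow> j \<le> n \<Longrightarrow> outA (M i j) \<in> cArr A" using mE X.pE by blast
    have ph: "\<And>i j. i \<le> j \<Longrightarrow> j \<le> n \<Longrightarrow> pYm fm (h (M i j)) = fm (outA (M i j))" using mE hE by blast
    show "mvalid B EYb (pYm fm) ieY n (\<lambda>i j. h (M i j))" unfolding mvalid_def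
    proof (intro conjI allI impI)
      fix i j assume ij: "i \<le> j \<and> j \<le> n"
      show "h (M i j) \<in> EYb" using hE mE ij by blast
      have ii: "i \<le> i" "i \<le> n" "j \<le> j" "j \<le> n" using ij by auto
      show "cDom B (pYm fm (h (M i j))) = cDom B (pYm fm (h (M i i)))"
        using ph[of i j] ph[OF ii(1,2)] fD(3)[OF arr[of i j]] fD(3)[OF arr[OF ii(1,2)]] mdo[of i j] ij by simp
      show "cCod B (pYm fm (h (M i j))) = cDom B (pYm fm (h (M j j)))"
        using ph[of i j] ph[OF ii(3,4)] fD(4)[OF arr[of i j]] fD(3)[OF arr[OF ii(3,4)]] mco[of i j] ij by simp
    next
      fix i assume i: "i \<le> n"
      then obtain x where x: "x \<in> cObj A" "M i i = ieX x" using md by blast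
      thus "\<exists>x\<in>cObj B. h (M i i) = ieY x" using hie fD(1) by auto
    next
      fix i j k assume ijk: "i \<le> j \<and> j \<le> k \<and> k \<le> n"
      have c: "cDom A (outA (M j k)) = cCod A (outA (M i j))" using mdo[of j k] mco[of i j] ijk by simp
      show "cComp B (pYm fm (h (M j k))) (pYm fm (h (M i j))) = pYm fm (h (M i k))"
        using ph[of i j] ph[of j k] ph[of i k] ijk fD(6)[OF arr[of i j] arr[of j k] c] mc[of i j k] by simp
    qed
  qed
  have smap: "is_smap X.S Y.S g" unfolding is_smap_def
  proof (intro conjI allI impI ballI)
    fix n l assume "l \<in> Simp X.S n"
    then obtain M where M: "mvalid A EXa outA ieX n M" "l = enc n M" unfolding Nss_simp by auto
    show "g n l \<in> Simp Y.S n" unfolding g_def M(2) enc_map Nss_simp using mv[OF M(1)] by blast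
  next
    fix m n \<theta> l assume d: "dmap m n \<theta>" and "l \<in> Simp X.S n"
    then obtain M where M: "l = enc n M" unfolding Nss_simp by auto
    show "g m (sact X.S m n \<theta> l) = sact Y.S m n \<theta> (g n l)"
      unfolding g_def M sact_enc[OF d] enc_map ..
  qed
  have smono: "is_smono X.S Y.S g" unfolding is_smono_def
  proof (intro conjI allI smap)
    fix n show "inj_on (g n) (Simp X.S n)" unfolding inj_on_def
    proof (intro ballI impI)
      fix l1 l2 assume l1: "l1 \<in> Simp X.S n" and l2: "l2 \<in> Simp X.S n" and e: "g n l1 = g n l2"
      have s: "set l \<subseteq> EXa" if l: "l \<in> Simp X.S n" for l
      proof -
        obtain M where M: "mvalid A EXa outA ieX n M" "l = enc n M" using l unfolding Nss_simp by auto
        show ?thesis unfolding M(2) set_enc using X.mvE[OF M(1)] by blast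
      qed
      have "inj_on h (set l1 \<union> set l2)" using inj_on_subset[OF hinj] s[OF l1] s[OF l2] by blast
      thus "l1 = l2" using e inj_on_map_eq_map unfolding g_def by blast
    qed
  qed
  have ai: "arrow_iso A B fo fm (Pi_cat X.S) (Pi_cat Y.S) (Pi_obj g) (Pi_arr Y.S g)" unfolding arrow_iso_def
  proof (intro exI conjI ballI)
    show "iso_functor A (Pi_cat X.S) X.Phio X.Phim" by (rule X.Phi_iso)
    show "iso_functor B (Pi_cat Y.S) Y.Phio Y.Phim" by (rule Y.Phi_iso)
  next
    fix x assume x: "x \<in> cObj A"
    show "Pi_obj g (X.Phio x) = Y.Phio (fo x)" unfolding Pi_obj_def g_def X.Phio_def Y.Phio_def using hie[OF x] by simp
  next
    fix a assume a: "a \<in> cArr A"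
    define q0 where "q0 = ([ieX (cDom A a)], [X.can a])"
    have v0: "valid_path X.S q0" unfolding q0_def using X.can_path(1)[OF a] .
    define r where "r = (SOME r. r \<in> X.Phim a)"
    have pr: "pirel X.S q0 r" unfolding r_def X.Phim_def q0_def[symmetric] using X.cls_some[OF v0] .
    have pr': "pirel Y.S (gpath g q0) (gpath g r)" using smap_pirel[OF smap pr] .
    have vg: "valid_path Y.S (gpath g q0)" using smap_valid[OF smap v0] .
    have "Pi_arr Y.S g (X.Phim a) = pi_class Y.S (gpath g r)" unfolding Pi_arr_def r_def gpath_def by (simp add: Let_def)
    also have "\<dots> = pi_class Y.S (gpath g q0)" using Y.cls_eq[OF vg pr'] ..
    also have "\<dots> = Y.Phim (fm a)" unfolding Y.Phim_def
    proof (rule Y.cls_eq[OF vg])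
      have fa: "fm a \<in> cArr B" using fD(2)[OF a] .
      have da: "cDom A a \<in> cObj A" using cat_dom[OF cA a] .
      have ca: "cCod A a \<in> cObj A" using cat_cod[OF cA a] .
      define e where "e = (SOME e. e \<in> EXa \<and> outA e = a)"
      have e: "e \<in> EXa" "outA e = a" using X.can_props(1,2)[OF a] unfolding e_def by auto
      have gq: "gpath g q0 = ([ieY (fo (cDom A a))], [[ieY (fo (cDom A a)), h e, ieY (fo (cCod A a))]])"
        unfolding gpath_def q0_def g_def X.can_def e_def[symmetric] using hie[OF da] hie[OF ca] by simp
      have fda: "fo (cDom A a) \<in> cObj B" using fD(1)[OF da] .
      have "Y.pc (gpath g q0) = fm a" unfolding gq Y.pc_simp[OF fda]
        using hE[OF e(1)] e(2) cat_idr[OF cB fa] fD(3)[OF a] by simp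
      thus "pirel Y.S (gpath g q0) ([ieY (cDom B (fm a))], [Y.can (fm a)])" unfolding Y.pirel_iff
        using vg Y.can_path[OF fa] gq fD(3)[OF a] by simp
    qed
    finally show "Pi_arr Y.S g (X.Phim a) = Y.Phim (fm a)" .
  qed
  show ?thesis using is_sset_Nss[of A EXa outA ieX] is_sset_Nss[of B EYb "pYm fm" ieY] smono ai by blast
qed


theorem lemma2p4:
  fixes A :: "('ao, 'am) cat" and B :: "('bo, 'bm) cat"
    and fo :: "'ao \<Rightarrow> 'bo" and fm :: "'am \<Rightarrow> 'bm"
  assumes "is_category A" and "is_category B" and "is_functor A B fo fm"
  shows "(inj_on fo (cObj A) \<longleftrightarrow>
           (\<exists>(X :: ('ao, 'bo, 'am, 'bm) wit sset) (Y :: ('ao, 'bo, 'am, 'bm) wit sset) g.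
              is_sset X \<and> is_sset Y \<and> is_smono X Y g \<and>
              arrow_iso A B fo fm (Pi_cat X) (Pi_cat Y) (Pi_obj g) (Pi_arr Y g)))
         \<and> (\<forall>(X :: 'x sset) (Y :: 'y sset) g.
              is_sset X \<and> is_sset Y \<and> is_smono X Y g \<and>
              arrow_iso A B fo fm (Pi_cat X) (Pi_cat Y) (Pi_obj g) (Pi_arr Y g) \<longrightarrow>
              inj_on fo (cObj A))"
proof (intro conjI iffI allI impI)
  assume inj: "inj_on fo (cObj A)"
  show "\<exists>(X :: ('ao, 'bo, 'am, 'bm) wit sset) (Y :: ('ao, 'bo, 'am, 'bm) wit sset) g.
              is_sset X \<and> is_sset Y \<and> is_smono X Y g \<and>
              arrow_iso A B fo fm (Pi_cat X) (Pi_cat Y) (Pi_obj g) (Pi_arr Y g)"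
    by (rule forward[OF assms inj])
next
  assume "\<exists>(X :: ('ao, 'bo, 'am, 'bm) wit sset) (Y :: ('ao, 'bo, 'am, 'bm) wit sset) g.
              is_sset X \<and> is_sset Y \<and> is_smono X Y g \<and>
              arrow_iso A B fo fm (Pi_cat X) (Pi_cat Y) (Pi_obj g) (Pi_arr Y g)"
  then obtain X :: "('ao, 'bo, 'am, 'bm) wit sset" and Y :: "('ao, 'bo, 'am, 'bm) wit sset" and g
    where h: "is_smono X Y g" "arrow_iso A B fo fm (Pi_cat X) (Pi_cat Y) (Pi_obj g) (Pi_arr Y g)" by blast
  show "inj_on fo (cObj A)" by (rule converse[OF assms(3) h])
next
  fix X :: "'x sset" and Y :: "'y sset" and g
  assume "is_sset X \<and> is_sset Y \<and> is_smono X Y g \<and>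
              arrow_iso A B fo fm (Pi_cat X) (Pi_cat Y) (Pi_obj g) (Pi_arr Y g)"
  thus "inj_on fo (cObj A)" using converse[OF assms(3)] by blast
qed

end
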